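(* For all $m,n\ge1$ with $n\ge\frac87\|[\Gamma]_{\underline m}^{-1}\|$ we have $\{8\sqrt m\,\|[\Xi]_{\underline m}\|\le1\}\subset\{[\widehat\Gamma]_{\underline m}\text{ is non-singular and }\|[\widehat\Gamma]_{\underline m}^{-1}\|\le n\}$.
   Context: $\mathbb H$ is a separable Hilbert space with orthonormal basis $\{\psi_j\}$; $[h]_{\underline m}=(\langle h,\psi_j\rangle)_{j\le m}$, $[T]_{\underline m}=(\langle\psi_j,T\psi_k\rangle)_{1\le j,k\le m}$; matrix norms are spectral norms; $[\mathrm I]_{\underline m}$ is the identity. $\Gamma$ is a strictly positive covariance operator of a centered $\mathbb H$-valued random element $X$ (so $[\Gamma]_{\underline m}$ is positive definite), $X_1,\dots,X_n$ are i.i.d. copies, $[\widehat\Gamma]_{\underline m}=n^{-1}\sum_i[X_i]_{\underline m}[X_i]_{\underline m}^t$, and $[\Xi]_{\underline m}:=[\Gamma]_{\underline m}^{-1/2}[\widehat\Gamma]_{\underline m}[\Gamma]_{\underline m}^{-1/2}-[\mathrm I]_{\underline m}$. *)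

theory Defs
  imports "HOL-Analysis.Analysis" "Jordan_Normal_Form.Matrix"
begin

definition vnorm :: "real vec \<Rightarrow> real" where
  "vnorm x = sqrt (x \<bullet> x)"

definition spec_norm :: "real mat \<Rightarrow> real" where
  "spec_norm A = Sup {vnorm (A *\<^sub>v x) | x. x \<in> carrier_vec (dim_col A) \<and> vnorm x \<le> 1}"

definition sym_mat :: "real mat \<Rightarrow> bool" where
  "sym_mat A \<longleftrightarrow> A\<^sup>T = A"

definition posdef_mat :: "real mat \<Rightarrow> bool" where
  "posdef_mat A \<longleftrightarrow> (\<forall>x \<in> carrier_vec (dim_col A). x \<noteq> 0\<^sub>v (dim_col A) \<longrightarrow> x \<bullet> (A *\<^sub>v x) > 0)"

text \<open>Inverse of a square matrix (meaningful when it is invertible).\<close>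
definition mat_inv :: "real mat \<Rightarrow> real mat" where
  "mat_inv A = (THE B. B \<in> carrier_mat (dim_row A) (dim_row A) \<and> A * B = 1\<^sub>m (dim_row A))"

text \<open>A^(-1/2): the symmetric positive definite square root of the inverse of a
  (symmetric positive definite) matrix A.\<close>
definition mat_inv_sqrt :: "real mat \<Rightarrow> real mat" where
  "mat_inv_sqrt A = (THE S. S \<in> carrier_mat (dim_row A) (dim_row A) \<and> sym_mat S \<and> posdef_mat S
       \<and> S * S * A = 1\<^sub>m (dim_row A))"

text \<open>Coefficient vector [h]_m = (<h,psi_j>)_{1<=j<=m}; JNF indices are 0-based,
  so entry j corresponds to psi (j+1).\<close>
definition coef_vec :: "(nat \<Rightarrow> 'h::real_inner) \<Rightarrow> nat \<Rightarrow> 'h \<Rightarrow> real vec" where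
  "coef_vec \<psi> m h = vec m (\<lambda>j. inner h (\<psi> (Suc j)))"

definition coef_mat :: "(nat \<Rightarrow> 'h::real_inner) \<Rightarrow> nat \<Rightarrow> ('h \<Rightarrow> 'h) \<Rightarrow> real mat" where
  "coef_mat \<psi> m T = mat m m (\<lambda>(j,k). inner (\<psi> (Suc j)) (T (\<psi> (Suc k))))"

definition emp_cov :: "(nat \<Rightarrow> 'h::real_inner) \<Rightarrow> nat \<Rightarrow> nat \<Rightarrow> (nat \<Rightarrow> 'h) \<Rightarrow> real mat" where
  "emp_cov \<psi> m n X = mat m m (\<lambda>(j,k). (1 / real n) *
      (\<Sum>i\<in>{1..n}. (coef_vec \<psi> m (X i)) $ j * (coef_vec \<psi> m (X i)) $ k))"

definition Xi_mat :: "(nat \<Rightarrow> 'h::real_inner) \<Rightarrow> nat \<Rightarrow> ('h \<Rightarrow> 'h) \<Rightarrow> nat \<Rightarrow> (nat \<Rightarrow> 'h) \<Rightarrow> real mat" where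
  "Xi_mat \<psi> m \<Gamma> n X = mat_inv_sqrt (coef_mat \<psi> m \<Gamma>) * emp_cov \<psi> m n X * mat_inv_sqrt (coef_mat \<psi> m \<Gamma>)
      - 1\<^sub>m m"

end

theory Submission
  imports Defs "Jordan_Normal_Form.Schur_Decomposition"
begin


lemma real_sym_eigenvalue:
  fixes A :: "real mat"
  assumes A: "A \<in> carrier_mat n n" and n: "n > 0" and sym: "transpose_mat A = A"
  shows "\<exists>e. eigenvalue A e"
proof -
  define Ac where "Ac = map_mat complex_of_real A"
  have Ac: "Ac \<in> carrier_mat n n" using A unfolding Ac_def by auto
  obtain as where cp: "char_poly Ac = (\<Prod> a \<leftarrow> as. [:- a, 1:])" and len: "length as = n"
    using char_poly_factorized[OF Ac] by blast
  define a where "a = hd as"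
  have "a \<in> set as" using len n unfolding a_def by (cases as) auto
  hence "poly (char_poly Ac) a = 0" unfolding cp
    by (induct as) auto
  hence "eigenvalue Ac a" using eigenvalue_root_char_poly[OF Ac] by simp
  then obtain v where ev: "eigenvector Ac v a" unfolding eigenvalue_def by auto
  hence v: "v \<in> carrier_vec n" and v0: "v \<noteq> 0\<^sub>v n" and Av: "Ac *\<^sub>v v = a \<cdot>\<^sub>v v"
    using Ac unfolding eigenvector_def by auto
  define s where "s = (\<Sum>i<n. cnj (v$i) * (Ac *\<^sub>v v)$i)"
  define r where "r = (\<Sum>i<n. cnj (v$i) * v$i)"
  have s1: "s = a * r" unfolding s_def r_def Av using v
    by (auto simp: sum_distrib_left intro!: sum.cong)
  have s2: "s = (\<Sum>i<n. \<Sum>j<n. cnj (v$i) * complex_of_real (A $$ (i,j)) * v$j)"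
    unfolding s_def using v A
    by (auto simp: Ac_def scalar_prod_def sum_distrib_left mult.assoc intro!: sum.cong)
  have symA: "\<And>i j. i < n \<Longrightarrow> j < n \<Longrightarrow> A $$ (i,j) = A $$ (j,i)"
    using sym A by (metis carrier_matD index_transpose_mat(1))
  have "cnj s = (\<Sum>i<n. \<Sum>j<n. v$i * complex_of_real (A $$ (i,j)) * cnj (v$j))"
    unfolding s2 by simp
  also have "\<dots> = (\<Sum>j<n. \<Sum>i<n. v$i * complex_of_real (A $$ (i,j)) * cnj (v$j))"
    by (rule sum.swap)
  also have "\<dots> = s" unfolding s2
    by (intro sum.cong refl, simp add: symA mult.commute mult.left_commute)
  finally have cs: "cnj s = s" .
  have rr: "r = complex_of_real (\<Sum>i<n. (cmod (v$i))^2)"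
  proof -
    have e: "cnj z * z = complex_of_real ((cmod z)^2)" for z
      by (subst complex_norm_square) (rule mult.commute)
    show ?thesis unfolding r_def of_real_sum by (simp only: e)
  qed
  have "\<exists>i<n. v$i \<noteq> 0" using v v0 by (metis carrier_vecD eq_vecI index_zero_vec(1) index_zero_vec(2))
  then obtain i where i: "i < n" "v$i \<noteq> 0" by auto
  have "(\<Sum>i<n. (cmod (v$i))^2) \<ge> (cmod (v$i))^2"
    by (rule member_le_sum) (use i in auto)
  moreover have "(cmod (v$i))^2 > 0" using i by auto
  ultimately have rpos: "(\<Sum>i<n. (cmod (v$i))^2) > 0" by linarith
  have "cnj a * r = a * r" using cs s1 rr by (metis complex_cnj_complex_of_real complex_cnj_mult)
  have "r \<noteq> 0" unfolding rr of_real_eq_0_iff using rpos by linarith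
  hence "cnj a = a" using mult_right_cancel[OF \<open>r \<noteq> 0\<close>] \<open>cnj a * r = a * r\<close> by blast
  hence "Im (cnj a) = Im a" by simp
  hence "Im a = 0" by simp
  hence aR: "a = complex_of_real (Re a)" by (simp add: complex_eq_iff)
  have cpe: "char_poly Ac = map_poly complex_of_real (char_poly A)"
    unfolding Ac_def by (rule of_real_hom.char_poly_hom[OF A])
  have pe: "poly (char_poly Ac) (complex_of_real (Re a)) = 0"
    using \<open>poly (char_poly Ac) a = 0\<close> aR by argo
  have "complex_of_real (poly (char_poly A) (Re a)) = 0"
  proof -
    have "poly (map_poly complex_of_real (char_poly A)) (complex_of_real (Re a)) = complex_of_real (poly (char_poly A) (Re a))"
      by (rule of_real_hom.poly_map_poly)
    thus ?thesis using cpe pe by argo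
  qed
  hence "poly (char_poly A) (Re a) = 0" by simp
  thus ?thesis using eigenvalue_root_char_poly[OF A] by blast
qed


lemma cscalar_real: "(v::real vec) \<bullet>c w = v \<bullet> w"
  by (simp add: scalar_prod_def)

lemma scalar_self_nonneg: "(v::real vec) \<bullet> v \<ge> 0"
  by (simp add: scalar_prod_def sum_nonneg)

lemma real_sym_diag:
  fixes A :: "real mat"
  assumes "A \<in> carrier_mat n n" "transpose_mat A = A"
  shows "\<exists>U D. U \<in> carrier_mat n n \<and> D \<in> carrier_mat n n \<and> diagonal_mat D \<and>
     transpose_mat U * U = 1\<^sub>m n \<and> A = U * D * transpose_mat U"
  using assms
proof (induct n arbitrary: A)
  case 0
  show ?case
    by (rule exI[of _ "1\<^sub>m 0"], rule exI[of _ A]) (use 0 in \<open>auto simp: diagonal_mat_def intro!: eq_matI\<close>)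
next
  case (Suc k A)
  let ?n = "Suc k"
  have A: "A \<in> carrier_mat ?n ?n" and symA: "transpose_mat A = A" using Suc by auto
  obtain e where "eigenvalue A e" using real_sym_eigenvalue[OF A _ symA] by auto
  define v where "v = find_eigenvector A e"
  have "eigenvector A v e" using find_eigenvector[OF A \<open>eigenvalue A e\<close>] v_def by simp
  hence v: "v \<in> carrier_vec ?n" and v0: "v \<noteq> 0\<^sub>v ?n" and Av: "A *\<^sub>v v = e \<cdot>\<^sub>v v"
    using A unfolding eigenvector_def by auto
  interpret cof_vec_space ?n "TYPE(real)" .
  define b where "b = basis_completion v"
  from basis_completion[OF v v0, folded b_def]
  have dist_b: "distinct b" and indep: "\<not> lin_dep (set b)" and bc: "set b \<subseteq> carrier_vec ?n"
    and hdb: "hd b = v" and len_b: "length b = ?n" by auto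
  from hdb len_b obtain vs where bv: "b = v # vs" by (cases b, auto)
  define ws where "ws = gram_schmidt ?n b"
  from gram_schmidt_result[OF bc dist_b indep ws_def]
  have wsc: "set ws \<subseteq> carrier_vec ?n" and orth: "corthogonal ws" and len_ws: "length ws = ?n"
    using len_b by auto
  have ws0: "ws ! 0 = v" using gram_schmidt_hd[OF v, of vs] len_ws unfolding ws_def bv
    by (metis hd_conv_nth list.size(3) nat.distinct(1) bv ws_def)
  have wsi: "i < ?n \<Longrightarrow> ws ! i \<in> carrier_vec ?n" for i using wsc len_ws by auto
  have worth: "i < ?n \<Longrightarrow> j < ?n \<Longrightarrow> ws ! i \<bullet> ws ! j = 0 \<longleftrightarrow> i \<noteq> j" for i j
    using corthogonalD[OF orth, of i j] len_ws by (simp add: cscalar_real)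
  have wpos: "i < ?n \<Longrightarrow> ws ! i \<bullet> ws ! i > 0" for i
    using worth[of i i] scalar_self_nonneg[of "ws ! i"] by linarith
  define ns where "ns = map (\<lambda>w. (1 / sqrt (w \<bullet> w)) \<cdot>\<^sub>v w) ws"
  have len_ns: "length ns = ?n" unfolding ns_def using len_ws by simp
  have nsi: "i < ?n \<Longrightarrow> ns ! i = (1 / sqrt (ws ! i \<bullet> ws ! i)) \<cdot>\<^sub>v ws ! i" for i
    unfolding ns_def using len_ws by simp
  have nsc: "i < ?n \<Longrightarrow> ns ! i \<in> carrier_vec ?n" for i using nsi wsi by simp
  have northo: "i < ?n \<Longrightarrow> j < ?n \<Longrightarrow> ns ! i \<bullet> ns ! j = (if i = j then 1 else 0)" for i j
  proof -
    assume i: "i < ?n" and j: "j < ?n"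
    have "ns ! i \<bullet> ns ! j = (1 / sqrt (ws ! i \<bullet> ws ! i)) * (1 / sqrt (ws ! j \<bullet> ws ! j)) * (ws ! i \<bullet> ws ! j)"
      unfolding nsi[OF i] nsi[OF j] using wsi[OF i] wsi[OF j]
      by (simp add: smult_scalar_prod_distrib scalar_prod_smult_distrib)
    also have "\<dots> = (if i = j then 1 else 0)"
    proof (cases "i = j")
      case True
      have p: "ws ! i \<bullet> ws ! i > 0" using wpos i by auto
      hence "sqrt (ws ! i \<bullet> ws ! i) * sqrt (ws ! i \<bullet> ws ! i) = ws ! i \<bullet> ws ! i"
        by (simp add: real_sqrt_mult_self)
      thus ?thesis using True p by (simp add: field_simps)
    next
      case False thus ?thesis using worth[OF i j] by simp
    qed
    finally show ?thesis .
  qed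
  define N where "N = mat_of_cols ?n ns"
  have N: "N \<in> carrier_mat ?n ?n" unfolding N_def using len_ns by (metis mat_of_cols_carrier(1))
  have colN: "i < ?n \<Longrightarrow> col N i = ns ! i" for i unfolding N_def using nsc len_ns by simp
  have NtN: "transpose_mat N * N = 1\<^sub>m ?n"
    by (rule eq_matI, insert N, auto simp: colN northo)
  have NNt: "N * transpose_mat N = 1\<^sub>m ?n"
    using mat_mult_left_right_inverse[OF _ N NtN] N by auto
  define c where "c = 1 / sqrt (v \<bullet> v)"
  have col0: "col N 0 = c \<cdot>\<^sub>v v" using colN[of 0] nsi[of 0] ws0 c_def by simp
  have ACol0: "A *\<^sub>v col N 0 = e \<cdot>\<^sub>v col N 0"
    unfolding col0 using A v Av by (metis mult_mat_vec smult_smult_assoc mult.commute)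
  define A' where "A' = transpose_mat N * A * N"
  have A': "A' \<in> carrier_mat ?n ?n" unfolding A'_def using A N by auto
  have symA': "transpose_mat A' = A'"
  proof -
    have "transpose_mat (transpose_mat N * A * N) = transpose_mat N * transpose_mat (transpose_mat N * A)"
      using A N by (intro transpose_mult[of _ ?n ?n]) auto
    also have "transpose_mat (transpose_mat N * A) = transpose_mat A * transpose_mat (transpose_mat N)"
      using A N by (intro transpose_mult[of _ ?n ?n]) auto
    also have "\<dots> = A * N" using symA by simp
    also have "transpose_mat N * (A * N) = transpose_mat N * A * N"
      using A N by (simp add: assoc_mult_mat[of _ ?n ?n _ ?n _ ?n])
    finally show ?thesis unfolding A'_def .
  qed
  have A'col: "i < ?n \<Longrightarrow> A' $$ (i, 0) = (if i = 0 then e else 0)" for i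
  proof -
    assume i: "i < ?n"
    have "A' $$ (i, 0) = (transpose_mat N * (A * N)) $$ (i, 0)"
      unfolding A'_def using A N by (simp add: assoc_mult_mat[of _ ?n ?n _ ?n _ ?n])
    also have "\<dots> = col N i \<bullet> col (A * N) 0" using A N i by simp
    also have "col (A * N) 0 = A *\<^sub>v col N 0" using A N by (simp add: col_mult2)
    also have "col N i \<bullet> (A *\<^sub>v col N 0) = e * (col N i \<bullet> col N 0)"
      unfolding ACol0 using N i by (simp add: scalar_prod_smult_distrib[of _ ?n])
    also have "\<dots> = (if i = 0 then e else 0)" using colN northo i by simp
    finally show ?thesis .
  qed
  have A'row: "j < ?n \<Longrightarrow> A' $$ (0, j) = (if j = 0 then e else 0)" for j
    using A'col[of j] symA' A' by (metis carrier_matD index_transpose_mat(1) zero_less_Suc)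
  define A3 where "A3 = mat k k (\<lambda>(i,j). A' $$ (Suc i, Suc j))"
  have A3: "A3 \<in> carrier_mat k k" unfolding A3_def by simp
  have symA3: "transpose_mat A3 = A3"
    unfolding A3_def using symA' A' by (intro eq_matI) (auto, metis carrier_matD index_transpose_mat(1) Suc_less_eq)
  from Suc(1)[OF A3 symA3] obtain U3 D3 where U3: "U3 \<in> carrier_mat k k" and D3: "D3 \<in> carrier_mat k k"
    and dD3: "diagonal_mat D3" and U3U3: "transpose_mat U3 * U3 = 1\<^sub>m k" and A3eq: "A3 = U3 * D3 * transpose_mat U3"
    by blast
  define E where "E = mat 1 1 (\<lambda>_. e)"
  have E: "E \<in> carrier_mat 1 1" unfolding E_def by simp
  have A'eq: "A' = four_block_mat E (0\<^sub>m 1 k) (0\<^sub>m k 1) A3"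
    by (rule eq_matI, insert A' A3 E A'col A'row, auto simp: E_def A3_def)
  define U' where "U' = four_block_mat (1\<^sub>m 1) (0\<^sub>m 1 k) (0\<^sub>m k 1) U3"
  define D' where "D' = four_block_mat E (0\<^sub>m 1 k) (0\<^sub>m k 1) D3"
  have U': "U' \<in> carrier_mat ?n ?n" unfolding U'_def using U3 by (metis four_block_carrier_mat one_carrier_mat plus_1_eq_Suc)
  have D': "D' \<in> carrier_mat ?n ?n" unfolding D'_def using D3 E by (metis four_block_carrier_mat plus_1_eq_Suc)
  have U't: "transpose_mat U' = four_block_mat (1\<^sub>m 1) (0\<^sub>m 1 k) (0\<^sub>m k 1) (transpose_mat U3)"
    unfolding U'_def using U3 by (subst transpose_four_block_mat) auto
  have U'U': "transpose_mat U' * U' = 1\<^sub>m ?n"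
    unfolding U't unfolding U'_def using U3 U3U3
    by (subst mult_four_block_mat[of _ 1 1 _ k _ k _ _ 1 _ k]) auto
  have UD: "U' * D' = four_block_mat E (0\<^sub>m 1 k) (0\<^sub>m k 1) (U3 * D3)"
    unfolding U'_def D'_def using U3 D3 E
    by (subst mult_four_block_mat[of _ 1 1 _ k _ k _ _ 1 _ k]) auto
  have UDU: "U' * D' * transpose_mat U' = A'"
    unfolding U't A'eq A3eq UD using U3 D3 E
    by (subst mult_four_block_mat[of _ 1 1 _ k _ k _ _ 1 _ k]) auto
  have dD': "diagonal_mat D'"
    using dD3 D3 E unfolding D'_def diagonal_mat_def by (auto simp: E_def)
  show ?case
  proof (intro exI conjI)
    show "N * U' \<in> carrier_mat ?n ?n" using N U' by auto
    show "D' \<in> carrier_mat ?n ?n" by fact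
    show "diagonal_mat D'" by fact
    have "transpose_mat (N * U') * (N * U') = transpose_mat U' * (transpose_mat N * N) * U'"
      using N U' by (simp add: transpose_mult[of _ ?n ?n] assoc_mult_mat[of _ ?n ?n _ ?n _ ?n])
    thus "transpose_mat (N * U') * (N * U') = 1\<^sub>m ?n" using NtN U'U' U' by simp
    have "N * U' * D' * transpose_mat (N * U') = N * (U' * D' * transpose_mat U') * transpose_mat N"
      using N U' D' by (simp add: transpose_mult[of _ ?n ?n] assoc_mult_mat[of _ ?n ?n _ ?n _ ?n])
    also have "\<dots> = N * (transpose_mat N * A * N) * transpose_mat N" unfolding UDU A'_def ..
    also have "\<dots> = (N * transpose_mat N) * A * (N * transpose_mat N)"
      using N A by (simp add: assoc_mult_mat[of _ ?n ?n _ ?n _ ?n])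
    also have "\<dots> = A" using NNt A by simp
    finally show "A = N * U' * D' * transpose_mat (N * U')" by simp
  qed
qed


lemma diag_mult:
  fixes X Y :: "real mat"
  assumes X: "X \<in> carrier_mat m m" and Y: "Y \<in> carrier_mat m m'" and dX: "diagonal_mat X"
    and i: "i < m" and j: "j < m'"
  shows "(X * Y) $$ (i, j) = X $$ (i, i) * Y $$ (i, j)"
proof -
  have "(X * Y) $$ (i, j) = (\<Sum>k<m. X $$ (i, k) * Y $$ (k, j))"
    using X Y i j by (simp add: scalar_prod_def atLeast0LessThan)
  also have "\<dots> = (\<Sum>k<m. if k = i then X $$ (i, i) * Y $$ (i, j) else 0)"
    by (rule sum.cong[OF refl]) (use dX X i in \<open>auto simp: diagonal_mat_def\<close>)
  also have "\<dots> = X $$ (i, i) * Y $$ (i, j)" using i by simp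
  finally show ?thesis .
qed

lemma diag_mult_vec:
  fixes X :: "real mat"
  assumes X: "X \<in> carrier_mat m m" and y: "y \<in> carrier_vec m" and dX: "diagonal_mat X"
    and i: "i < m"
  shows "(X *\<^sub>v y) $ i = X $$ (i, i) * y $ i"
proof -
  have "(X *\<^sub>v y) $ i = (\<Sum>k<m. X $$ (i, k) * y $ k)"
    using X y i by (simp add: scalar_prod_def atLeast0LessThan)
  also have "\<dots> = (\<Sum>k<m. if k = i then X $$ (i, i) * y $ i else 0)"
    by (rule sum.cong[OF refl]) (use dX X i in \<open>auto simp: diagonal_mat_def\<close>)
  also have "\<dots> = X $$ (i, i) * y $ i" using i by simp
  finally show ?thesis .
qed

lemma tr_comm:
  fixes A B :: "real mat"
  assumes A: "A \<in> carrier_mat m m" and B: "B \<in> carrier_mat m m"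
  shows "(\<Sum>i<m. (A * B) $$ (i, i)) = (\<Sum>i<m. (B * A) $$ (i, i))"
proof -
  have "(\<Sum>i<m. (A * B) $$ (i, i)) = (\<Sum>i<m. \<Sum>k<m. A $$ (i, k) * B $$ (k, i))"
    using A B by (simp add: scalar_prod_def atLeast0LessThan)
  also have "\<dots> = (\<Sum>k<m. \<Sum>i<m. B $$ (k, i) * A $$ (i, k))"
    by (subst sum.swap) (simp add: mult.commute)
  also have "\<dots> = (\<Sum>i<m. (B * A) $$ (i, i))"
    using A B by (simp add: scalar_prod_def atLeast0LessThan)
  finally show ?thesis .
qed

lemma vec_nonzero_ex:
  fixes x :: "real vec"
  assumes "x \<in> carrier_vec m" "x \<noteq> 0\<^sub>v m"
  shows "\<exists>i<m. x $ i \<noteq> 0"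
  using assms by (metis carrier_vecD eq_vecI index_zero_vec(1) index_zero_vec(2))

lemma sqrt_exists:
  fixes G :: "real mat"
  assumes G: "G \<in> carrier_mat m m" and symG: "transpose_mat G = G" and pd: "posdef_mat G"
  shows "\<exists>S. S \<in> carrier_mat m m \<and> sym_mat S \<and> posdef_mat S \<and> S * S * G = 1\<^sub>m m"
proof -
  obtain U D where U: "U \<in> carrier_mat m m" and D: "D \<in> carrier_mat m m" and dD: "diagonal_mat D"
    and UtU: "transpose_mat U * U = 1\<^sub>m m" and Geq: "G = U * D * transpose_mat U"
    using real_sym_diag[OF G symG] by blast
  have Ut: "transpose_mat U \<in> carrier_mat m m" using U by simp
  have UUt: "U * transpose_mat U = 1\<^sub>m m" using mat_mult_left_right_inverse[OF Ut U UtU] .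
  have cancel: "X \<in> carrier_mat m k \<Longrightarrow> transpose_mat U * (U * X) = X" for X k
    using U UtU by (metis Ut assoc_mult_mat left_mult_one_mat)
  have DUGU: "D = transpose_mat U * G * U"
  proof -
    have "transpose_mat U * G * U = transpose_mat U * (U * (D * (transpose_mat U * U)))"
      unfolding Geq using U D by (simp add: assoc_mult_mat[of _ m m _ m _ m])
    also have "\<dots> = D" using cancel D UtU by simp
    finally show ?thesis by simp
  qed
  have dpos: "i < m \<Longrightarrow> D $$ (i, i) > 0" for i
  proof -
    assume i: "i < m"
    have "D $$ (i, i) = (transpose_mat U * (G * U)) $$ (i, i)"
      unfolding DUGU using U G by (simp add: assoc_mult_mat[of _ m m _ m _ m])
    also have "\<dots> = col U i \<bullet> (G *\<^sub>v col U i)" using U G i by simp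
    finally have eq: "D $$ (i, i) = col U i \<bullet> (G *\<^sub>v col U i)" .
    have "col U i \<bullet> col U i = 1" using arg_cong[OF UtU, of "\<lambda>M. M $$ (i,i)"] U i by simp
    hence "col U i \<noteq> 0\<^sub>v m" by auto
    moreover have "col U i \<in> carrier_vec m" using U by auto
    ultimately show ?thesis using pd G unfolding posdef_mat_def eq by auto
  qed
  define Dm where "Dm = mat m m (\<lambda>(i,j). if i = j then 1 / sqrt (D $$ (i,i)) else (0::real))"
  have Dm: "Dm \<in> carrier_mat m m" unfolding Dm_def by simp
  have dDm: "diagonal_mat Dm" unfolding Dm_def diagonal_mat_def by simp
  have DmDm: "diagonal_mat (Dm * Dm)" unfolding diagonal_mat_def
  proof (intro allI impI)
    fix i j assume a: "i < dim_row (Dm * Dm)" "j < dim_col (Dm * Dm)" "i \<noteq> j"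
    hence "i < m" "j < m" using Dm by auto
    thus "(Dm * Dm) $$ (i, j) = 0" using diag_mult[OF Dm Dm dDm, of i j] a(3) by (simp add: Dm_def)
  qed
  have DmDmD: "Dm * Dm * D = 1\<^sub>m m"
  proof (rule eq_matI)
    fix i j assume i: "i < dim_row (1\<^sub>m m)" and j: "j < dim_col (1\<^sub>m m)"
    hence i: "i < m" and j: "j < m" by auto
    have "(Dm * Dm * D) $$ (i, j) = (Dm * Dm) $$ (i, i) * D $$ (i, j)"
      using diag_mult[OF _ D DmDm i j] Dm by auto
    also have "\<dots> = Dm $$ (i, i) * Dm $$ (i, i) * D $$ (i, j)"
      using diag_mult[OF Dm Dm dDm i i] by simp
    also have "\<dots> = 1\<^sub>m m $$ (i, j)"
    proof (cases "i = j")
      case True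
      have p: "D $$ (i,i) > 0" using dpos i by auto
      hence "sqrt (D $$ (i,i)) * sqrt (D $$ (i,i)) = D $$ (i,i)" by simp
      thus ?thesis using True p i by (simp add: Dm_def field_simps)
    next
      case False thus ?thesis using dD D i j unfolding diagonal_mat_def by auto
    qed
    finally show "(Dm * Dm * D) $$ (i, j) = 1\<^sub>m m $$ (i, j)" .
  qed (use Dm D in auto)
  define S where "S = U * Dm * transpose_mat U"
  have S: "S \<in> carrier_mat m m" unfolding S_def using U Dm by auto
  show ?thesis
  proof (intro exI conjI)
    show "S \<in> carrier_mat m m" by fact
    have "transpose_mat Dm = Dm" unfolding Dm_def by (intro eq_matI) auto
    hence "transpose_mat (U * Dm * transpose_mat U) = U * Dm * transpose_mat U"
    proof -
      assume tD: "transpose_mat Dm = Dm"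
      have "transpose_mat (U * Dm * transpose_mat U) = transpose_mat (transpose_mat U) * transpose_mat (U * Dm)"
        using U Dm by (intro transpose_mult[of _ m m]) auto
      also have "transpose_mat (U * Dm) = transpose_mat Dm * transpose_mat U"
        using U Dm by (intro transpose_mult[of _ m m]) auto
      finally show ?thesis using tD U Dm by (simp add: assoc_mult_mat[of _ m m _ m _ m])
    qed
    thus "sym_mat S" unfolding sym_mat_def S_def .
    show "S * S * G = 1\<^sub>m m"
    proof -
      have "S * S * G = U * (Dm * (transpose_mat U * (U * (Dm * (transpose_mat U * (U * (D * transpose_mat U)))))))"
        unfolding S_def Geq using U Dm D by (simp add: assoc_mult_mat[of _ m m _ m _ m])
      also have "\<dots> = U * (Dm * (Dm * (D * transpose_mat U)))"
      proof -
        have c1: "transpose_mat U * (U * (D * transpose_mat U)) = D * transpose_mat U"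
          using cancel[of "D * transpose_mat U" m] U D by simp
        have c2: "transpose_mat U * (U * (Dm * (D * transpose_mat U))) = Dm * (D * transpose_mat U)"
          using cancel[of "Dm * (D * transpose_mat U)" m] U D Dm by simp
        show ?thesis unfolding c1 c2 ..
      qed
      also have "\<dots> = U * ((Dm * Dm * D) * transpose_mat U)"
        using U Dm D by (simp add: assoc_mult_mat[of _ m m _ m _ m])
      also have "\<dots> = 1\<^sub>m m" unfolding DmDmD using UUt Ut by simp
      finally show ?thesis .
    qed
    show "posdef_mat S" unfolding posdef_mat_def
    proof (intro ballI impI)
      fix x :: "real vec" assume x: "x \<in> carrier_vec (dim_col S)" and x0: "x \<noteq> 0\<^sub>v (dim_col S)"
      hence x: "x \<in> carrier_vec m" and x0: "x \<noteq> 0\<^sub>v m" using S by auto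
      define y where "y = transpose_mat U *\<^sub>v x"
      have y: "y \<in> carrier_vec m" unfolding y_def using U x by simp
      have "U *\<^sub>v y = x" unfolding y_def using U x UUt
        by (metis Ut assoc_mult_mat_vec one_mult_mat_vec)
      hence y0: "y \<noteq> 0\<^sub>v m" using x0 U by auto
      have "x \<bullet> (S *\<^sub>v x) = x \<bullet> (U *\<^sub>v (Dm *\<^sub>v y))"
      proof -
        have "S *\<^sub>v x = (U * Dm) *\<^sub>v (transpose_mat U *\<^sub>v x)" unfolding S_def
          by (rule assoc_mult_mat_vec) (use U Dm x in auto)
        also have "\<dots> = U *\<^sub>v (Dm *\<^sub>v (transpose_mat U *\<^sub>v x))"
          by (rule assoc_mult_mat_vec) (use U Dm x in auto)
        finally show ?thesis unfolding y_def by simp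
      qed
      also have "\<dots> = y \<bullet> (Dm *\<^sub>v y)"
      proof -
        have "(transpose_mat U *\<^sub>v x) \<bullet> (Dm *\<^sub>v y) = x \<bullet> (U *\<^sub>v (Dm *\<^sub>v y))"
          by (rule transpose_vec_mult_scalar[OF U _ x]) (use Dm y in auto)
        thus ?thesis unfolding y_def by simp
      qed
      also have "\<dots> = (\<Sum>i<m. y $ i * (Dm $$ (i,i) * y $ i))"
      proof -
        have "y \<bullet> (Dm *\<^sub>v y) = (\<Sum>i<m. y $ i * (Dm *\<^sub>v y) $ i)"
          using y Dm by (simp add: scalar_prod_def atLeast0LessThan)
        also have "\<dots> = (\<Sum>i<m. y $ i * (Dm $$ (i,i) * y $ i))"
          by (rule sum.cong[OF refl]) (simp add: diag_mult_vec[OF Dm y dDm])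
        finally show ?thesis .
      qed
      also have "\<dots> > 0"
      proof -
        obtain i where i: "i < m" "y $ i \<noteq> 0" using vec_nonzero_ex[OF y y0] by auto
        have t: "k < m \<Longrightarrow> y $ k * (Dm $$ (k,k) * y $ k) = (y $ k)^2 / sqrt (D $$ (k,k))" for k
          by (simp add: Dm_def power2_eq_square)
        have nn: "k < m \<Longrightarrow> (y $ k)^2 / sqrt (D $$ (k,k)) \<ge> 0" for k
          using dpos[of k] by (intro divide_nonneg_pos) auto
        have "(\<Sum>k<m. y $ k * (Dm $$ (k,k) * y $ k)) = (\<Sum>k<m. (y $ k)^2 / sqrt (D $$ (k,k)))"
          by (rule sum.cong) (auto simp: t)
        also have "\<dots> \<ge> (y $ i)^2 / sqrt (D $$ (i,i))"
          by (rule member_le_sum) (use i nn in auto)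
        finally have "(\<Sum>k<m. y $ k * (Dm $$ (k,k) * y $ k)) \<ge> (y $ i)^2 / sqrt (D $$ (i,i))" .
        moreover have "(y $ i)^2 / sqrt (D $$ (i,i)) > 0" using i dpos[OF i(1)] by simp
        ultimately show ?thesis by linarith
      qed
      finally show "x \<bullet> (S *\<^sub>v x) > 0" .
    qed
  qed
qed


lemma quad_term:
  fixes D P :: "real mat"
  assumes D: "D \<in> carrier_mat m m" and P: "P \<in> carrier_mat m m" and symD: "transpose_mat D = D"
    and pd: "posdef_mat P" and i: "i < m"
  shows "(D * (P * D)) $$ (i, i) = col D i \<bullet> (P *\<^sub>v col D i)"
    and "(D * (P * D)) $$ (i, i) \<ge> 0"
    and "(D * (P * D)) $$ (i, i) = 0 \<Longrightarrow> col D i = 0\<^sub>v m"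
proof -
  have "(D * (P * D)) $$ (i, i) = row D i \<bullet> col (P * D) i" using D P i by simp
  also have "row D i = col D i" using col_transpose[of i D] symD D i by simp
  also have "col (P * D) i = P *\<^sub>v col D i" using D P i by simp
  finally show eq: "(D * (P * D)) $$ (i, i) = col D i \<bullet> (P *\<^sub>v col D i)" .
  have c: "col D i \<in> carrier_vec m" using D by auto
  show "(D * (P * D)) $$ (i, i) \<ge> 0"
  proof (cases "col D i = 0\<^sub>v m")
    case True thus ?thesis unfolding eq using P by simp
  next
    case False thus ?thesis unfolding eq using pd P c unfolding posdef_mat_def
      by (metis carrier_matD(2) less_eq_real_def)
  qed
  show "col D i = 0\<^sub>v m" if "(D * (P * D)) $$ (i, i) = 0"
    using that pd P c unfolding eq posdef_mat_def by (metis carrier_matD(2) less_irrefl)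
qed

lemma sqrt_unique:
  fixes G S1 S2 :: "real mat"
  assumes G: "G \<in> carrier_mat m m" and S1: "S1 \<in> carrier_mat m m" and S2: "S2 \<in> carrier_mat m m"
    and sy1: "sym_mat S1" and sy2: "sym_mat S2" and pd1: "posdef_mat S1" and pd2: "posdef_mat S2"
    and e1: "S1 * S1 * G = 1\<^sub>m m" and e2: "S2 * S2 * G = 1\<^sub>m m"
  shows "S1 = S2"
proof -
  have P1: "S1 * S1 \<in> carrier_mat m m" and P2: "S2 * S2 \<in> carrier_mat m m" using S1 S2 by auto
  have GP2: "G * (S2 * S2) = 1\<^sub>m m" using mat_mult_left_right_inverse[OF P2 G e2] .
  have PP: "S1 * S1 = S2 * S2"
  proof -
    have "S1 * S1 = S1 * S1 * (G * (S2 * S2))" unfolding GP2 using right_mult_one_mat[OF P1] by simp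
    also have "\<dots> = (S1 * S1 * G) * (S2 * S2)" using P1 P2 G by (simp add: assoc_mult_mat[of _ m m _ m _ m])
    finally show ?thesis unfolding e1 using left_mult_one_mat[OF P2] by simp
  qed
  define D where "D = S1 - S2"
  have D: "D \<in> carrier_mat m m" unfolding D_def using S2 by (rule minus_carrier_mat)
  have symD: "transpose_mat D = D" unfolding D_def
    using sy1 sy2 S1 S2 unfolding sym_mat_def by (intro eq_matI) (auto, metis index_transpose_mat(1) carrier_matD)
  have "S1 * D = S1 * S1 - S1 * S2" unfolding D_def by (rule mult_minus_distrib_mat[OF S1 S1 S2])
  moreover have "D * S2 = S1 * S2 - S2 * S2" unfolding D_def by (rule minus_mult_distrib_mat[OF S1 S2 S2])
  ultimately have M0: "S1 * D + D * S2 = 0\<^sub>m m m" unfolding PP using S1 S2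
    by (intro eq_matI) auto
  have "D * (S1 * D) + D * (D * S2) = D * (S1 * D + D * S2)"
    using D S1 S2 by (simp add: mult_add_distrib_mat[of _ m m _ m])
  also have "\<dots> = 0\<^sub>m m m" unfolding M0 using D by simp
  finally have Z: "D * (S1 * D) + D * (D * S2) = 0\<^sub>m m m" .
  have "(\<Sum>i<m. (D * (S1 * D)) $$ (i,i)) + (\<Sum>i<m. (D * (D * S2)) $$ (i,i)) = (\<Sum>i<m. (D * (S1 * D) + D * (D * S2)) $$ (i,i))"
    using D S1 S2 by (simp add: sum.distrib)
  also have "\<dots> = 0" unfolding Z by simp
  finally have sum0: "(\<Sum>i<m. (D * (S1 * D)) $$ (i,i)) + (\<Sum>i<m. (D * (D * S2)) $$ (i,i)) = 0" .
  have "(\<Sum>i<m. (D * (D * S2)) $$ (i,i)) = (\<Sum>i<m. ((D * S2) * D) $$ (i,i))"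
    using tr_comm[of D m "D * S2"] D S2 by simp
  also have "\<dots> = (\<Sum>i<m. (D * (S2 * D)) $$ (i,i))"
    using D S2 by (simp add: assoc_mult_mat[of _ m m _ m _ m])
  finally have t2: "(\<Sum>i<m. (D * (D * S2)) $$ (i,i)) = (\<Sum>i<m. (D * (S2 * D)) $$ (i,i))" .
  have n1: "\<And>i. i < m \<Longrightarrow> (D * (S1 * D)) $$ (i,i) \<ge> 0" using quad_term(2)[OF D S1 symD pd1] by blast
  have n2: "\<And>i. i < m \<Longrightarrow> (D * (S2 * D)) $$ (i,i) \<ge> 0" using quad_term(2)[OF D S2 symD pd2] by blast
  have s1: "(\<Sum>i<m. (D * (S1 * D)) $$ (i,i)) \<ge> 0" using n1 by (intro sum_nonneg) auto
  have s2: "(\<Sum>i<m. (D * (S2 * D)) $$ (i,i)) \<ge> 0" using n2 by (intro sum_nonneg) auto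
  have "(\<Sum>i<m. (D * (S1 * D)) $$ (i,i)) = 0" using sum0 t2 s1 s2 by linarith
  hence "\<forall>i\<in>{..<m}. (D * (S1 * D)) $$ (i,i) = 0"
    using sum_nonneg_eq_0_iff[of "{..<m}" "\<lambda>i. (D * (S1 * D)) $$ (i,i)"] n1 by auto
  hence colz: "\<And>i. i < m \<Longrightarrow> col D i = 0\<^sub>v m" using quad_term(3)[OF D S1 symD pd1] by blast
  have "D = 0\<^sub>m m m"
  proof (rule eq_matI)
    fix i j assume "i < dim_row (0\<^sub>m m m)" "j < dim_col (0\<^sub>m m m)"
    hence i: "i < m" and j: "j < m" by auto
    have "D $$ (i, j) = col D j $ i" using D i j by simp
    also have "\<dots> = 0" using colz[OF j] i by simp
    finally show "D $$ (i, j) = 0\<^sub>m m m $$ (i, j)" using i j by simp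
  qed (use D in auto)
  show ?thesis
  proof (rule eq_matI)
    fix i j assume "i < dim_row S2" "j < dim_col S2"
    hence i: "i < m" and j: "j < m" using S2 by auto
    have "D $$ (i, j) = S1 $$ (i, j) - S2 $$ (i, j)" unfolding D_def using S2 i j by simp
    thus "S1 $$ (i, j) = S2 $$ (i, j)" using \<open>D = 0\<^sub>m m m\<close> i j by simp
  qed (use S1 S2 in auto)
qed

lemma mat_inv_sqrt_props:
  fixes G :: "real mat"
  assumes G: "G \<in> carrier_mat m m" and symG: "transpose_mat G = G" and pd: "posdef_mat G"
  shows "mat_inv_sqrt G \<in> carrier_mat m m \<and> sym_mat (mat_inv_sqrt G) \<and> posdef_mat (mat_inv_sqrt G)
     \<and> mat_inv_sqrt G * mat_inv_sqrt G * G = 1\<^sub>m m"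
proof -
  have dr: "dim_row G = m" using G by simp
  let ?P = "\<lambda>S. S \<in> carrier_mat m m \<and> sym_mat S \<and> posdef_mat S \<and> S * S * G = 1\<^sub>m m"
  have "\<exists>!S. ?P S"
    using sqrt_exists[OF G symG pd] sqrt_unique[OF G] by blast
  hence "?P (THE S. ?P S)" by (rule theI')
  thus ?thesis unfolding mat_inv_sqrt_def dr .
qed


lemma mat_vec_zero: "A *\<^sub>v 0\<^sub>v (dim_col A) = (0\<^sub>v (dim_row A) :: real vec)"
  by (intro eq_vecI) (auto simp: scalar_prod_def)

lemma vnorm_L2: "x \<in> carrier_vec m \<Longrightarrow> vnorm x = L2_set (\<lambda>i. x $ i) {..<m}"
  unfolding vnorm_def L2_set_def scalar_prod_def by (simp add: power2_eq_square atLeast0LessThan)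

lemma vnorm_nonneg: "vnorm x \<ge> 0"
  unfolding vnorm_def using scalar_self_nonneg[of x] by simp

lemma vnorm_sq: "vnorm x ^ 2 = x \<bullet> x"
  unfolding vnorm_def using scalar_self_nonneg[of x] by simp

lemma vnorm_CS:
  assumes x: "x \<in> carrier_vec m" and y: "y \<in> carrier_vec m"
  shows "\<bar>x \<bullet> y\<bar> \<le> vnorm x * vnorm y"
proof -
  have "\<bar>x \<bullet> y\<bar> = \<bar>\<Sum>i<m. x $ i * y $ i\<bar>" using y by (simp add: scalar_prod_def atLeast0LessThan)
  also have "\<dots> \<le> (\<Sum>i<m. \<bar>x $ i\<bar> * \<bar>y $ i\<bar>)" by (rule order_trans[OF sum_abs]) (simp add: abs_mult)
  also have "\<dots> \<le> L2_set (\<lambda>i. x $ i) {..<m} * L2_set (\<lambda>i. y $ i) {..<m}" by (rule L2_set_mult_ineq)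
  finally show ?thesis using vnorm_L2[OF x] vnorm_L2[OF y] by simp
qed

lemma vnorm_smult: "vnorm (c \<cdot>\<^sub>v x) = \<bar>c\<bar> * vnorm x"
proof -
  have "(c \<cdot>\<^sub>v x) \<bullet> (c \<cdot>\<^sub>v x) = c^2 * (x \<bullet> x)"
    by (simp add: scalar_prod_def sum_distrib_left power2_eq_square mult_ac)
  thus ?thesis unfolding vnorm_def by (simp add: real_sqrt_mult)
qed

lemma vnorm_zero_iff:
  assumes x: "x \<in> carrier_vec m"
  shows "vnorm x = 0 \<longleftrightarrow> x = 0\<^sub>v m"
proof
  assume "vnorm x = 0"
  hence "L2_set (\<lambda>i. x $ i) {..<m} = 0" using vnorm_L2[OF x] by simp
  hence "\<forall>i\<in>{..<m}. x $ i = 0" by (simp add: L2_set_eq_0_iff)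
  thus "x = 0\<^sub>v m" using x by (intro eq_vecI) auto
next
  assume "x = 0\<^sub>v m" thus "vnorm x = 0" unfolding vnorm_def by simp
qed

lemma vnorm_add_lower:
  assumes x: "x \<in> carrier_vec m" and w: "w \<in> carrier_vec m"
  shows "vnorm (x + w) \<ge> vnorm x - vnorm w"
proof -
  have "(x + w) \<bullet> (x + w) = x \<bullet> x + 2 * (x \<bullet> w) + w \<bullet> w"
    using x w by (simp add: add_scalar_prod_distrib[of _ m] scalar_prod_add_distrib[of _ m] comm_scalar_prod[of w m x])
  moreover have "x \<bullet> w \<ge> - (vnorm w * vnorm x)" using vnorm_CS[OF x w] by (simp add: mult.commute)
  ultimately have "vnorm (x + w) ^ 2 \<ge> (vnorm x - vnorm w) ^ 2"
    unfolding vnorm_sq[symmetric] by (simp add: power2_diff)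
  hence "vnorm (x + w) \<ge> \<bar>vnorm x - vnorm w\<bar>"
    using vnorm_nonneg[of "x + w"] by (metis abs_le_square_iff abs_of_nonneg)
  thus ?thesis by linarith
qed

lemma mat_vec_bound:
  assumes A: "A \<in> carrier_mat nr nc" and x: "x \<in> carrier_vec nc"
  shows "vnorm (A *\<^sub>v x) \<le> (\<Sum>i<nr. vnorm (row A i)) * vnorm x"
proof -
  have "vnorm (A *\<^sub>v x) = L2_set (\<lambda>i. (A *\<^sub>v x) $ i) {..<nr}" using A x by (intro vnorm_L2) auto
  also have "\<dots> \<le> (\<Sum>i<nr. \<bar>(A *\<^sub>v x) $ i\<bar>)" by (rule L2_set_le_sum_abs)
  also have "\<dots> = (\<Sum>i<nr. \<bar>row A i \<bullet> x\<bar>)" using A by simp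
  also have "\<dots> \<le> (\<Sum>i<nr. vnorm (row A i) * vnorm x)"
    by (rule sum_mono, rule vnorm_CS[of _ nc]) (use A x in auto)
  finally show ?thesis by (simp add: sum_distrib_right)
qed

definition SN :: "real mat \<Rightarrow> real set" where
  "SN A = {vnorm (A *\<^sub>v x) | x. x \<in> carrier_vec (dim_col A) \<and> vnorm x \<le> 1}"

lemma spec_norm_SN: "spec_norm A = Sup (SN A)" unfolding spec_norm_def SN_def ..

lemma SN_bdd: "bdd_above (SN A)"
proof -
  have A: "A \<in> carrier_mat (dim_row A) (dim_col A)" by auto
  show ?thesis unfolding SN_def bdd_above_def
  proof (intro exI[of _ "\<Sum>i<dim_row A. vnorm (row A i)"] allI impI ballI)
    fix y assume "y \<in> {vnorm (A *\<^sub>v x) |x. x \<in> carrier_vec (dim_col A) \<and> vnorm x \<le> 1}"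
    then obtain x where x: "x \<in> carrier_vec (dim_col A)" "vnorm x \<le> 1" and y: "y = vnorm (A *\<^sub>v x)" by auto
    have "y \<le> (\<Sum>i<dim_row A. vnorm (row A i)) * vnorm x" unfolding y by (rule mat_vec_bound[OF A x(1)])
    also have "\<dots> \<le> (\<Sum>i<dim_row A. vnorm (row A i))"
      using x(2) vnorm_nonneg by (intro mult_left_le) (auto intro: sum_nonneg)
    finally show "y \<le> (\<Sum>i<dim_row A. vnorm (row A i))" .
  qed
qed

lemma SN_zero: "0 \<in> SN A"
  unfolding SN_def
  by (rule CollectI, rule exI[of _ "0\<^sub>v (dim_col A)"]) (auto simp: vnorm_def mat_vec_zero)

lemma spec_norm_nonneg: "spec_norm A \<ge> 0"
  unfolding spec_norm_SN by (rule cSup_upper[OF SN_zero SN_bdd])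

lemma spec_norm_bound:
  assumes x: "x \<in> carrier_vec (dim_col A)"
  shows "vnorm (A *\<^sub>v x) \<le> spec_norm A * vnorm x"
proof (cases "vnorm x = 0")
  case True
  hence "x = 0\<^sub>v (dim_col A)" using vnorm_zero_iff[OF x] by simp
  thus ?thesis using True by (simp add: vnorm_def mat_vec_zero)
next
  case False
  hence p: "vnorm x > 0" using vnorm_nonneg[of x] by linarith
  define u where "u = (1 / vnorm x) \<cdot>\<^sub>v x"
  have u: "u \<in> carrier_vec (dim_col A)" unfolding u_def using x by simp
  have nu: "vnorm u = 1" unfolding u_def vnorm_smult using p by simp
  have "A *\<^sub>v u = (1 / vnorm x) \<cdot>\<^sub>v (A *\<^sub>v x)" unfolding u_def using x
    by (simp add: mult_mat_vec[of A "dim_row A" "dim_col A"])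
  hence "vnorm (A *\<^sub>v u) = vnorm (A *\<^sub>v x) / vnorm x" using p by (simp add: vnorm_smult)
  moreover have "vnorm (A *\<^sub>v u) \<in> SN A" unfolding SN_def using u nu by auto
  hence "vnorm (A *\<^sub>v u) \<le> spec_norm A" unfolding spec_norm_SN by (rule cSup_upper[OF _ SN_bdd])
  ultimately have e: "vnorm (A *\<^sub>v x) = vnorm x * vnorm (A *\<^sub>v u)" and
    le: "vnorm (A *\<^sub>v u) \<le> spec_norm A" using p by (auto simp: field_simps)
  show ?thesis unfolding e using mult_left_mono[OF le, of "vnorm x"] p by (simp add: mult.commute)
qed

lemma spec_norm_le:
  assumes c: "c \<ge> 0" and h: "\<And>x. x \<in> carrier_vec (dim_col A) \<Longrightarrow> vnorm (A *\<^sub>v x) \<le> c * vnorm x"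
  shows "spec_norm A \<le> c"
  unfolding spec_norm_SN
proof (rule cSup_least)
  show "SN A \<noteq> {}" using SN_zero by auto
  fix y assume "y \<in> SN A"
  then obtain x where x: "x \<in> carrier_vec (dim_col A)" "vnorm x \<le> 1" and y: "y = vnorm (A *\<^sub>v x)"
    unfolding SN_def by auto
  have "y \<le> c * vnorm x" unfolding y by (rule h[OF x(1)])
  also have "\<dots> \<le> c" using c x(2) by (simp add: mult_left_le)
  finally show "y \<le> c" .
qed


lemma mat_inv_eq:
  fixes A B :: "real mat"
  assumes A: "A \<in> carrier_mat k k" and B: "B \<in> carrier_mat k k" and AB: "A * B = 1\<^sub>m k"
  shows "mat_inv A = B"
proof -
  have BA: "B * A = 1\<^sub>m k" using mat_mult_left_right_inverse[OF A B AB] .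
  have "(THE B. B \<in> carrier_mat k k \<and> A * B = 1\<^sub>m k) = B"
  proof (rule the_equality)
    show "B \<in> carrier_mat k k \<and> A * B = 1\<^sub>m k" using B AB by simp
    fix C assume C: "C \<in> carrier_mat k k \<and> A * C = 1\<^sub>m k"
    have "C = (B * A) * C" unfolding BA using C left_mult_one_mat[of C k k] by simp
    also have "\<dots> = B * (A * C)" using A B C by (simp add: assoc_mult_mat[of _ k k _ k _ k])
    finally show "C = B" using C B by simp
  qed
  thus ?thesis unfolding mat_inv_def using A by simp
qed

lemma coef_posdef:
  fixes \<psi> :: "nat \<Rightarrow> 'h::{real_inner, complete_space}" and \<Gamma> :: "'h \<Rightarrow> 'h"
  assumes onb_orth: "\<And>i j. i \<ge> 1 \<Longrightarrow> j \<ge> 1 \<Longrightarrow> inner (\<psi> i) (\<psi> j) = (if i = j then 1 else 0)"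
    and Gamma_lin: "bounded_linear \<Gamma>"
    and Gamma_pos: "\<And>h. h \<noteq> 0 \<Longrightarrow> inner h (\<Gamma> h) > 0"
  shows "posdef_mat (coef_mat \<psi> m \<Gamma>)"
  unfolding posdef_mat_def
proof (intro ballI impI)
  let ?G = "coef_mat \<psi> m \<Gamma>"
  have G: "?G \<in> carrier_mat m m" unfolding coef_mat_def by simp
  fix x :: "real vec" assume x: "x \<in> carrier_vec (dim_col ?G)" and x0: "x \<noteq> 0\<^sub>v (dim_col ?G)"
  hence x: "x \<in> carrier_vec m" and x0: "x \<noteq> 0\<^sub>v m" using G by auto
  have lin: "linear \<Gamma>" using Gamma_lin bounded_linear.linear by blast
  define h where "h = (\<Sum>j<m. (x $ j) *\<^sub>R \<psi> (Suc j))"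
  have Gh: "\<Gamma> h = (\<Sum>j<m. (x $ j) *\<^sub>R \<Gamma> (\<psi> (Suc j)))"
    unfolding h_def using lin by (simp add: linear_sum linear_scale)
  have "inner h (\<Gamma> h) = (\<Sum>j<m. \<Sum>k<m. x $ j * (x $ k * inner (\<psi> (Suc k)) (\<Gamma> (\<psi> (Suc j)))))"
    unfolding Gh unfolding h_def by (simp add: inner_sum_left inner_sum_right sum_distrib_left)
  also have "\<dots> = (\<Sum>k<m. \<Sum>j<m. x $ j * (x $ k * inner (\<psi> (Suc k)) (\<Gamma> (\<psi> (Suc j)))))"
    by (rule sum.swap)
  also have "\<dots> = x \<bullet> (?G *\<^sub>v x)"
    using x by (simp add: scalar_prod_def atLeast0LessThan coef_mat_def sum_distrib_left mult_ac)
  finally have eq: "inner h (\<Gamma> h) = x \<bullet> (?G *\<^sub>v x)" .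
  obtain i where i: "i < m" "x $ i \<noteq> 0" using vec_nonzero_ex[OF x x0] by auto
  have "inner h (\<psi> (Suc i)) = (\<Sum>j<m. x $ j * (if Suc j = Suc i then 1 else 0))"
    unfolding h_def by (simp add: inner_sum_left onb_orth)
  also have "\<dots> = x $ i" using i by (simp add: if_distrib cong: if_cong)
  finally have "h \<noteq> 0" using i by auto
  thus "x \<bullet> (?G *\<^sub>v x) > 0" using Gamma_pos eq by metis
qed


theorem lemmaB5:
  fixes \<psi> :: "nat \<Rightarrow> 'h::{real_inner, complete_space}"
    and \<Gamma> :: "'h \<Rightarrow> 'h"
    and X :: "nat \<Rightarrow> 'h"
    and m n :: nat
  assumes onb_orth: "\<And>i j. i \<ge> 1 \<Longrightarrow> j \<ge> 1 \<Longrightarrow> inner (\<psi> i) (\<psi> j) = (if i = j then 1 else 0)"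
    and onb_complete: "closure (span (\<psi> ` {1..})) = UNIV"
    and Gamma_lin: "bounded_linear \<Gamma>"
    and Gamma_sa: "\<And>x y. inner (\<Gamma> x) y = inner x (\<Gamma> y)"
    and Gamma_pos: "\<And>h. h \<noteq> 0 \<Longrightarrow> inner h (\<Gamma> h) > 0"
    and m1: "m \<ge> 1" and n1: "n \<ge> 1"
    and n_large: "real n \<ge> 8 / 7 * spec_norm (mat_inv (coef_mat \<psi> m \<Gamma>))"
    and event: "8 * sqrt (real m) * spec_norm (Xi_mat \<psi> m \<Gamma> n X) \<le> 1"
  shows "invertible_mat (emp_cov \<psi> m n X)
         \<and> spec_norm (mat_inv (emp_cov \<psi> m n X)) \<le> real n"
proof -
  define G where "G = coef_mat \<psi> m \<Gamma>"
  define Gh where "Gh = emp_cov \<psi> m n X"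
  define S where "S = mat_inv_sqrt G"
  define Xi where "Xi = Xi_mat \<psi> m \<Gamma> n X"
  have G: "G \<in> carrier_mat m m" unfolding G_def coef_mat_def by simp
  have Gh: "Gh \<in> carrier_mat m m" unfolding Gh_def emp_cov_def by simp
  have symG: "transpose_mat G = G"
    by (rule eq_matI) (use G in \<open>auto simp: G_def coef_mat_def, metis Gamma_sa inner_commute\<close>)
  have pdG: "posdef_mat G" unfolding G_def by (rule coef_posdef[OF onb_orth Gamma_lin Gamma_pos])
  from mat_inv_sqrt_props[OF G symG pdG, folded S_def]
  have S: "S \<in> carrier_mat m m" and syS: "sym_mat S" and SSG: "S * S * G = 1\<^sub>m m" by auto
  have St: "transpose_mat S = S" using syS unfolding sym_mat_def .
  have SS: "S * S \<in> carrier_mat m m" using S by simp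
  have GSS: "G * (S * S) = 1\<^sub>m m" using mat_mult_left_right_inverse[OF SS G SSG] .
  have invG: "mat_inv G = S * S" by (rule mat_inv_eq[OF G SS GSS])
  define c where "c = spec_norm (S * S)"
  have c0: "c \<ge> 0" unfolding c_def by (rule spec_norm_nonneg)
  have nc: "real n \<ge> 8 / 7 * c" using n_large unfolding c_def invG[symmetric] G_def .
  define T where "T = S * G"
  have T: "T \<in> carrier_mat m m" unfolding T_def using S G by simp
  have ST: "S * T = 1\<^sub>m m" unfolding T_def using SSG S G by (simp add: assoc_mult_mat[of _ m m _ m _ m])
  have TS: "T * S = 1\<^sub>m m" using mat_mult_left_right_inverse[OF S T ST] .
  define M where "M = S * Gh * S"
  have M: "M \<in> carrier_mat m m" unfolding M_def using S Gh by simp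
  have Xi_eq: "Xi = M - 1\<^sub>m m" unfolding Xi_def Xi_mat_def M_def S_def G_def Gh_def ..
  have Xi: "Xi \<in> carrier_mat m m" unfolding Xi_eq by (rule minus_carrier_mat) simp
  have Mx: "M *\<^sub>v x = x + Xi *\<^sub>v x" if x: "x \<in> carrier_vec m" for x
  proof -
    have "Xi *\<^sub>v x = M *\<^sub>v x - 1\<^sub>m m *\<^sub>v x" unfolding Xi_eq
      by (rule minus_mult_distrib_mat_vec[OF M _ x]) simp
    hence "Xi *\<^sub>v x = M *\<^sub>v x - x" using x by simp
    thus ?thesis using M x by (intro eq_vecI) auto
  qed
  have sXi: "spec_norm Xi \<le> 1 / 8"
  proof -
    have "sqrt (real m) \<ge> 1" using m1 by simp
    hence "8 * spec_norm Xi \<le> 8 * sqrt (real m) * spec_norm Xi"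
      using spec_norm_nonneg[of Xi] by (simp add: mult_right_mono)
    thus ?thesis using event unfolding Xi_def by linarith
  qed
  have Mlow: "vnorm (M *\<^sub>v x) \<ge> 7 / 8 * vnorm x" if x: "x \<in> carrier_vec m" for x
  proof -
    have xi: "Xi *\<^sub>v x \<in> carrier_vec m" using Xi x by simp
    have "vnorm (Xi *\<^sub>v x) \<le> spec_norm Xi * vnorm x" using spec_norm_bound[of x Xi] Xi x by simp
    also have "\<dots> \<le> 1 / 8 * vnorm x" using sXi vnorm_nonneg[of x] by (rule mult_right_mono)
    finally have "vnorm (Xi *\<^sub>v x) \<le> 1 / 8 * vnorm x" .
    moreover have "vnorm (M *\<^sub>v x) \<ge> vnorm x - vnorm (Xi *\<^sub>v x)"
      unfolding Mx[OF x] by (rule vnorm_add_lower[OF x xi])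
    ultimately show ?thesis by linarith
  qed
  have "det M \<noteq> 0"
  proof
    assume "det M = 0"
    then obtain v where v: "v \<in> carrier_vec m" "v \<noteq> 0\<^sub>v m" "M *\<^sub>v v = 0\<^sub>v m"
      using det_0_iff_vec_prod_zero_field[OF M] by blast
    have "vnorm v > 0" using vnorm_zero_iff[OF v(1)] v(2) vnorm_nonneg[of v] by linarith
    moreover have "vnorm (M *\<^sub>v v) = 0" using v(3) by (simp add: vnorm_def)
    ultimately show False using Mlow[OF v(1)] by linarith
  qed
  from det_non_zero_imp_unit[OF M this, of undefined]
  obtain Minv where Minv: "Minv \<in> carrier_mat m m" and MMinv: "M * Minv = 1\<^sub>m m"
    unfolding Units_def ring_mat_def by auto
  have Minvb: "vnorm (Minv *\<^sub>v y) \<le> 8 / 7 * vnorm y" if y: "y \<in> carrier_vec m" for y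
  proof -
    have z: "Minv *\<^sub>v y \<in> carrier_vec m" using Minv y by simp
    have "M *\<^sub>v (Minv *\<^sub>v y) = y" using M Minv y MMinv
      by (metis assoc_mult_mat_vec one_mult_mat_vec)
    hence "vnorm y \<ge> 7 / 8 * vnorm (Minv *\<^sub>v y)" using Mlow[OF z] by simp
    thus ?thesis by linarith
  qed
  have Sb: "vnorm (S *\<^sub>v w) \<le> sqrt c * vnorm w" if w: "w \<in> carrier_vec m" for w
  proof -
    have sw: "S *\<^sub>v w \<in> carrier_vec m" using S w by simp
    have "vnorm (S *\<^sub>v w) ^ 2 = (S *\<^sub>v w) \<bullet> (S *\<^sub>v w)" by (rule vnorm_sq)
    also have "\<dots> = (transpose_mat S *\<^sub>v (S *\<^sub>v w)) \<bullet> w"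
      by (rule transpose_vec_mult_scalar[OF S w sw, symmetric])
    also have "\<dots> = ((S * S) *\<^sub>v w) \<bullet> w" unfolding St using S w by simp
    also have "\<dots> \<le> vnorm ((S * S) *\<^sub>v w) * vnorm w"
      using vnorm_CS[of "(S * S) *\<^sub>v w" m w] S w by simp
    also have "\<dots> \<le> (c * vnorm w) * vnorm w"
      using spec_norm_bound[of w "S * S"] S w vnorm_nonneg[of w] unfolding c_def
      by (intro mult_right_mono) auto
    finally have "vnorm (S *\<^sub>v w) ^ 2 \<le> (sqrt c * vnorm w) ^ 2"
      using c0 by (simp add: power_mult_distrib power2_eq_square mult_ac)
    thus ?thesis using c0 vnorm_nonneg[of w]
      by (meson mult_nonneg_nonneg power2_le_imp_le real_sqrt_ge_zero)
  qed
  define Ghinv where "Ghinv = S * Minv * S"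
  have Ghinv: "Ghinv \<in> carrier_mat m m" unfolding Ghinv_def using S Minv by simp
  have Gh_eq: "Gh = T * M * T"
  proof -
    have "T * M * T = (T * S) * Gh * (S * T)"
      unfolding M_def using T S Gh by (simp add: assoc_mult_mat[of _ m m _ m _ m])
    thus ?thesis unfolding TS ST using Gh by simp
  qed
  have GhGhinv: "Gh * Ghinv = 1\<^sub>m m"
  proof -
    have "Gh * Ghinv = T * (M * (T * S) * Minv) * S"
      unfolding Gh_eq Ghinv_def using T M S Minv by (simp add: assoc_mult_mat[of _ m m _ m _ m])
    also have "\<dots> = T * S"
    proof -
      have e: "M * (T * S) * Minv = 1\<^sub>m m" unfolding TS using MMinv right_mult_one_mat[OF M] by simp
      show ?thesis unfolding e using right_mult_one_mat[OF T] by simp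
    qed
    finally show ?thesis unfolding TS .
  qed
  have GhinvGh: "Ghinv * Gh = 1\<^sub>m m" using mat_mult_left_right_inverse[OF Gh Ghinv GhGhinv] .
  have inv: "invertible_mat Gh"
    unfolding invertible_mat_def inverts_mat_def square_mat.simps
    using Gh Ghinv GhGhinv GhinvGh by (intro conjI exI[of _ Ghinv]) auto
  have mi: "mat_inv Gh = Ghinv" by (rule mat_inv_eq[OF Gh Ghinv GhGhinv])
  have "spec_norm Ghinv \<le> real n"
  proof (rule spec_norm_le)
    fix x :: "real vec" assume "x \<in> carrier_vec (dim_col Ghinv)"
    hence x: "x \<in> carrier_vec m" using Ghinv by simp
    have sx: "S *\<^sub>v x \<in> carrier_vec m" using S x by simp
    have msx: "Minv *\<^sub>v (S *\<^sub>v x) \<in> carrier_vec m" using Minv sx by simp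
    have "Ghinv *\<^sub>v x = S *\<^sub>v (Minv *\<^sub>v (S *\<^sub>v x))"
    proof -
      have "Ghinv *\<^sub>v x = (S * Minv) *\<^sub>v (S *\<^sub>v x)" unfolding Ghinv_def
        by (rule assoc_mult_mat_vec) (use S Minv x in auto)
      also have "\<dots> = S *\<^sub>v (Minv *\<^sub>v (S *\<^sub>v x))"
        by (rule assoc_mult_mat_vec) (use S Minv sx in auto)
      finally show ?thesis .
    qed
    hence "vnorm (Ghinv *\<^sub>v x) \<le> sqrt c * vnorm (Minv *\<^sub>v (S *\<^sub>v x))" using Sb[OF msx] by simp
    also have "\<dots> \<le> sqrt c * (8 / 7 * vnorm (S *\<^sub>v x))"
      using Minvb[OF sx] c0 by (intro mult_left_mono) auto
    also have "\<dots> \<le> sqrt c * (8 / 7 * (sqrt c * vnorm x))"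
      using Sb[OF x] c0 by (intro mult_left_mono) auto
    also have "\<dots> = 8 / 7 * c * vnorm x" using c0 by (simp add: mult_ac)
    also have "\<dots> \<le> real n * vnorm x" using nc vnorm_nonneg[of x] by (intro mult_right_mono) auto
    finally show "vnorm (Ghinv *\<^sub>v x) \<le> real n * vnorm x" .
  qed simp
  thus ?thesis using inv mi unfolding Gh_def by simp
qed

end
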